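(* Let $U$ be a domain in $\mathbb{R}^2$ (or $\mathbb{C}$) and $X$ a real or complex subspace of the smooth functions on $U$ with the unique continuation property. Let $\varphi\in L^1_{loc}(U)$ and let $\varphi_1,\dots,\varphi_r\in X$ be pairwise distinct such that $\Gamma:=\bigcap_{1\le i\le r}\operatorname{supp}(\varphi-\varphi_i)$ has Lebesgue measure $0$. Set $M_i=U\setminus\operatorname{supp}(\varphi-\varphi_i)$. Then: (i) $\bigcup_{i}M_i=U\setminus\Gamma$; (ii) $\overline{M_i}\cap M_j=\emptyset$ for $i\ne j$; (iii) $M_i$ equals the interior of $\overline{M_i}$ for each $i$; (iv) $\Gamma=\bigcup_{1\le i<j\le r}\overline{M_i}\cap\overline{M_j}$; (v) if $\varphi$ is continuous, then $\Gamma\subseteq g^{-1}(0)$, where $g=\prod_{1\le i<j\le r}(\varphi_i-\varphi_j)$.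
   Context: $X$ has the unique continuation property if every $f\in X$ vanishing on a nonempty open subset of $U$ vanishes identically. Supports are taken in the distribution sense. Closures are taken in $U$. "$\varphi$ is continuous" means $\varphi$ agrees a.e. with a continuous function on $U$. *)

theory Defs
  imports "HOL-Analysis.Analysis"
begin

text \<open>C^k functions on U (as maps R^2 -> R^2 = C): C^0 = continuous;
  C^(k+1) = Frechet differentiable on U with both partial derivatives
  (in directions 1 and i) of class C^k.\<close>
primrec Ck :: "nat \<Rightarrow> complex set \<Rightarrow> (complex \<Rightarrow> complex) \<Rightarrow> bool" where
  "Ck 0 U f = continuous_on U f"
| "Ck (Suc k) U f =
     (\<exists>g1 g2. (\<forall>x\<in>U. (f has_derivative (\<lambda>h. Re h *\<^sub>R g1 x + Im h *\<^sub>R g2 x)) (at x))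
             \<and> Ck k U g1 \<and> Ck k U g2)"

definition smooth_on :: "complex set \<Rightarrow> (complex \<Rightarrow> complex) \<Rightarrow> bool" where
  "smooth_on U f \<longleftrightarrow> (\<forall>k. Ck k U f)"

definition domain :: "complex set \<Rightarrow> bool" where
  "domain U \<longleftrightarrow> open U \<and> connected U \<and> U \<noteq> {}"

text \<open>X is a real linear subspace (covers complex subspaces and real-valued ones).\<close>
definition real_fun_subspace :: "(complex \<Rightarrow> complex) set \<Rightarrow> bool" where
  "real_fun_subspace X \<longleftrightarrow> (\<lambda>x. 0) \<in> X \<and> (\<forall>f\<in>X. \<forall>g\<in>X. (\<lambda>x. f x + g x) \<in> X)
      \<and> (\<forall>c::real. \<forall>f\<in>X. (\<lambda>x. c *\<^sub>R f x) \<in> X)"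

definition unique_continuation :: "complex set \<Rightarrow> (complex \<Rightarrow> complex) set \<Rightarrow> bool" where
  "unique_continuation U X \<longleftrightarrow>
     (\<forall>f\<in>X. (\<exists>V. open V \<and> V \<noteq> {} \<and> V \<subseteq> U \<and> (\<forall>x\<in>V. f x = 0)) \<longrightarrow> (\<forall>x\<in>U. f x = 0))"

definition locally_integrable_on :: "complex set \<Rightarrow> (complex \<Rightarrow> complex) \<Rightarrow> bool" where
  "locally_integrable_on U f \<longleftrightarrow> (\<forall>K. compact K \<and> K \<subseteq> U \<longrightarrow> set_integrable lebesgue K f)"

text \<open>Support in the distribution sense (relative to U): complement in U of the
  largest open subset of U on which the function vanishes a.e.\<close>
definition dsupp :: "complex set \<Rightarrow> (complex \<Rightarrow> complex) \<Rightarrow> complex set" where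
  "dsupp U f = U - \<Union>{V. open V \<and> V \<subseteq> U \<and> (AE x in lebesgue. x \<in> V \<longrightarrow> f x = 0)}"

definition ae_continuous_on :: "complex set \<Rightarrow> (complex \<Rightarrow> complex) \<Rightarrow> bool" where
  "ae_continuous_on U f \<longleftrightarrow>
     (\<exists>c. continuous_on U c \<and> (AE x in lebesgue. x \<in> U \<longrightarrow> f x = c x))"

end

theory Submission
  imports Defs
begin

lemma open_AE_empty:
  fixes S :: "complex set"
  assumes "open S" "AE x in lebesgue. x \<notin> S"
  shows "S = {}"
proof (rule ccontr)
  assume ne: "S \<noteq> {}"
  obtain N where N: "{x \<in> space lebesgue. \<not> x \<notin> S} \<subseteq> N" "N \<in> null_sets lebesgue"
    by (rule AE_E[OF assms(2)]) (blast intro: null_setsI)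
  have "S \<in> sets lebesgue" using assms(1) by simp
  moreover have "S \<subseteq> N" using N(1) by auto
  ultimately have "S \<in> null_sets lebesgue" using N(2) null_sets_subset by blast
  then show False using open_not_negligible[OF assms(1) ne] negligible_iff_null_sets by blast
qed

lemma cont_ae_eq:
  fixes f g :: "complex \<Rightarrow> complex"
  assumes "open V" "continuous_on V f" "continuous_on V g"
    "AE x in lebesgue. x \<in> V \<longrightarrow> f x = g x"
  shows "\<forall>x\<in>V. f x = g x"
proof -
  let ?S = "V \<inter> (\<lambda>x. f x - g x) -` (-{0})"
  have "continuous_on V (\<lambda>x. f x - g x)" using assms by (intro continuous_intros)
  then have "open ?S" using assms(1) by (intro continuous_open_preimage) auto
  moreover have "AE x in lebesgue. x \<notin> ?S" using assms(4) by eventually_elim auto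
  ultimately have "?S = {}" by (rule open_AE_empty)
  then show ?thesis by auto
qed

lemma dsupp_sub: "dsupp U f \<subseteq> U" unfolding dsupp_def by auto

lemma dsupp_compl: "U - dsupp U f = \<Union>{V. open V \<and> V \<subseteq> U \<and> (AE x in lebesgue. x \<in> V \<longrightarrow> f x = 0)}"
  unfolding dsupp_def by auto

lemma dsupp_open: "open (U - dsupp U f)"
  unfolding dsupp_compl by auto

lemma dsupp_AE: "AE x in lebesgue. x \<in> U - dsupp U f \<longrightarrow> f x = 0"
proof -
  let ?F = "{V::complex set. open V \<and> V \<subseteq> U \<and> (AE x in lebesgue. x \<in> V \<longrightarrow> f x = 0)}"
  obtain F' where F': "F' \<subseteq> ?F" "countable F'" "\<Union>F' = \<Union>?F"
    using Lindelof[of ?F] by blast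
  have "AE x in lebesgue. \<forall>V\<in>F'. x \<in> V \<longrightarrow> f x = 0"
    using F' by (subst AE_ball_countable) auto
  then show ?thesis unfolding dsupp_compl F'(3)[symmetric] by eventually_elim auto
qed

lemma dsupp_mem: "open V \<Longrightarrow> V \<subseteq> U \<Longrightarrow> (AE x in lebesgue. x \<in> V \<longrightarrow> f x = 0) \<Longrightarrow> V \<subseteq> U - dsupp U f"
  unfolding dsupp_compl by blast

lemma closure_eq:
  fixes f g :: "complex \<Rightarrow> complex"
  assumes "continuous_on U f" "continuous_on U g" "A \<subseteq> U" "x \<in> closure A" "x \<in> U"
    "\<forall>y\<in>A. f y = g y"
  shows "f x = g x"
proof -
  have "continuous_on U (\<lambda>y. f y - g y)" using assms by (intro continuous_intros)
  then have "closedin (top_of_set U) {y\<in>U. f y - g y = 0}"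
    by (rule continuous_closedin_preimage_constant)
  then obtain C where C: "closed C" "{y\<in>U. f y - g y = 0} = U \<inter> C"
    by (auto simp: closedin_closed)
  have "A \<subseteq> C" using C(2) assms(3,6) by auto
  then have "closure A \<subseteq> C" using C(1) closure_minimal by blast
  then have "x \<in> U \<inter> C" using assms(4,5) by auto
  then show ?thesis using C(2) by auto
qed

theorem lemma1:
  fixes U :: "complex set" and X :: "(complex \<Rightarrow> complex) set"
    and \<phi> :: "complex \<Rightarrow> complex" and \<phi>s :: "nat \<Rightarrow> complex \<Rightarrow> complex" and r :: nat
  assumes "domain U"
    and "real_fun_subspace X" and "\<forall>f\<in>X. smooth_on U f"
    and "unique_continuation U X"
    and "locally_integrable_on U \<phi>"
    and "\<forall>i\<in>{1..r}. \<phi>s i \<in> X"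
    and "\<forall>i\<in>{1..r}. \<forall>j\<in>{1..r}. i \<noteq> j \<longrightarrow> (\<exists>x\<in>U. \<phi>s i x \<noteq> \<phi>s j x)"
    and "U \<inter> (\<Inter>i\<in>{1..r}. dsupp U (\<lambda>x. \<phi> x - \<phi>s i x)) \<in> null_sets lebesgue"
  defines "\<Gamma> \<equiv> U \<inter> (\<Inter>i\<in>{1..r}. dsupp U (\<lambda>x. \<phi> x - \<phi>s i x))"
    and "M \<equiv> (\<lambda>i. U - dsupp U (\<lambda>x. \<phi> x - \<phi>s i x))"
  shows "((\<Union>i\<in>{1..r}. M i) = U - \<Gamma>)
    \<and> (\<forall>i\<in>{1..r}. \<forall>j\<in>{1..r}. i \<noteq> j \<longrightarrow> (closure (M i) \<inter> U) \<inter> M j = {})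
    \<and> (\<forall>i\<in>{1..r}. M i = interior (closure (M i) \<inter> U))
    \<and> (\<Gamma> = (\<Union>(i, j)\<in>{(i, j). 1 \<le> i \<and> i < j \<and> j \<le> r}.
                 (closure (M i) \<inter> U) \<inter> (closure (M j) \<inter> U)))
    \<and> (ae_continuous_on U \<phi> \<longrightarrow>
           \<Gamma> \<subseteq> {x. (\<Prod>(i, j)\<in>{(i, j). 1 \<le> i \<and> i < j \<and> j \<le> r}. \<phi>s i x - \<phi>s j x) = 0})"
proof -
  have Mopen: "open (M i)" for i unfolding M_def by (rule dsupp_open)
  have MU: "M i \<subseteq> U" for i unfolding M_def by auto
  have Mae: "AE x in lebesgue. x \<in> M i \<longrightarrow> \<phi> x = \<phi>s i x" for i
    using dsupp_AE[of U "\<lambda>x. \<phi> x - \<phi>s i x"] unfolding M_def by eventually_elim auto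
  have Mmem: "V \<subseteq> M i" if "open V" "V \<subseteq> U" "AE x in lebesgue. x \<in> V \<longrightarrow> \<phi> x = \<phi>s i x" for V i
  proof -
    have "AE x in lebesgue. x \<in> V \<longrightarrow> \<phi> x - \<phi>s i x = 0" using that(3) by eventually_elim auto
    then show ?thesis unfolding M_def by (rule dsupp_mem[OF that(1,2)])
  qed
  have cont: "continuous_on U (\<phi>s i)" if "i \<in> {1..r}" for i
    using assms(3,6) that unfolding smooth_on_def by (metis Ck.simps(1))
  have Uo: "open U" "U \<noteq> {}" using assms(1) unfolding domain_def by auto
  have Gnull: "\<Gamma> \<in> null_sets lebesgue" using assms(8) unfolding \<Gamma>_def .
  have Geq: "\<Gamma> = U - (\<Union>i\<in>{1..r}. M i)" unfolding \<Gamma>_def M_def using dsupp_sub by blast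
  have part1: "(\<Union>i\<in>{1..r}. M i) = U - \<Gamma>" using Geq MU by auto
  have disj: "closure (M i) \<inter> M j = {}" if ij: "i\<in>{1..r}" "j\<in>{1..r}" "i\<noteq>j" for i j
  proof (rule ccontr)
    assume "closure (M i) \<inter> M j \<noteq> {}"
    then have ne: "M i \<inter> M j \<noteq> {}" using Mopen[of j] open_Int_closure_eq_empty by blast
    let ?V = "M i \<inter> M j"
    have Vo: "open ?V" using Mopen by blast
    have "AE x in lebesgue. x \<in> ?V \<longrightarrow> \<phi>s i x = \<phi>s j x"
      using Mae[of i] Mae[of j] by eventually_elim auto
    moreover have "continuous_on ?V (\<phi>s i)" "continuous_on ?V (\<phi>s j)"
      using cont ij MU by (meson continuous_on_subset le_infI1 le_infI2)+
    ultimately have eqV: "\<forall>x\<in>?V. \<phi>s i x = \<phi>s j x" using cont_ae_eq[OF Vo] by blast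
    have inX: "(\<lambda>x. \<phi>s i x + (-1) *\<^sub>R \<phi>s j x) \<in> X"
    proof -
      have A: "\<forall>f\<in>X. \<forall>g\<in>X. (\<lambda>x. f x + g x) \<in> X" "\<forall>c::real. \<forall>f\<in>X. (\<lambda>x. c *\<^sub>R f x) \<in> X"
        using assms(2) unfolding real_fun_subspace_def by auto
      have i: "\<phi>s i \<in> X" and j: "\<phi>s j \<in> X" using assms(6) ij by auto
      have "(\<lambda>x. (-1) *\<^sub>R \<phi>s j x) \<in> X" using A(2) j by blast
      then show ?thesis using A(1) i by (metis (no_types))
    qed
    have "\<exists>V. open V \<and> V \<noteq> {} \<and> V \<subseteq> U \<and> (\<forall>x\<in>V. \<phi>s i x + (-1) *\<^sub>R \<phi>s j x = 0)"
    proof (intro exI[of _ ?V] conjI ballI)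
      show "open ?V" "?V \<noteq> {}" by (fact Vo, fact ne)
      show "?V \<subseteq> U" using MU[of i] by blast
      fix x assume "x \<in> ?V"
      then have "\<phi>s i x = \<phi>s j x" using eqV by blast
      then show "\<phi>s i x + (-1) *\<^sub>R \<phi>s j x = 0" by simp
    qed
    note exV = this
    have UC: "\<forall>f\<in>X. (\<exists>V. open V \<and> V \<noteq> {} \<and> V \<subseteq> U \<and> (\<forall>x\<in>V. f x = 0)) \<longrightarrow> (\<forall>x\<in>U. f x = 0)"
      using assms(4) unfolding unique_continuation_def .
    have "\<forall>x\<in>U. \<phi>s i x + (-1) *\<^sub>R \<phi>s j x = 0"
      using UC[rule_format, OF inX exV] by simp
    then have eqU: "\<forall>x\<in>U. \<phi>s i x = \<phi>s j x" by simp
    obtain x where "x \<in> U" "\<phi>s i x \<noteq> \<phi>s j x" using assms(7) ij by blast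
    then show False using eqU by blast
  qed
  have key: "T \<subseteq> M i" if T: "open T" "T \<subseteq> U" "\<forall>j\<in>{1..r}. j \<noteq> i \<longrightarrow> T \<inter> M j = {}" for T i
  proof -
    have TG: "T - \<Gamma> \<subseteq> M i"
    proof
      fix x assume x: "x \<in> T - \<Gamma>"
      then have "x \<in> U - \<Gamma>" using T(2) by auto
      then obtain j where j: "j \<in> {1..r}" "x \<in> M j" using part1 by blast
      show "x \<in> M i"
      proof (cases "j = i")
        case True then show ?thesis using j by simp
      next
        case False then show ?thesis using T(3) j x by blast
      qed
    qed
    have "AE x in lebesgue. x \<in> T \<longrightarrow> \<phi> x = \<phi>s i x"
      using Mae[of i] AE_not_in[OF Gnull] by eventually_elim (use TG in auto)
    then show ?thesis using Mmem T(1,2) by blast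
  qed
  have part3: "\<forall>i\<in>{1..r}. M i = interior (closure (M i) \<inter> U)"
  proof
    fix i assume i: "i \<in> {1..r}"
    let ?T = "interior (closure (M i) \<inter> U)"
    have "?T \<subseteq> M i"
    proof (rule key)
      show "open ?T" by (rule open_interior)
      show "?T \<subseteq> U" using interior_subset by blast
      show "\<forall>j\<in>{1..r}. j \<noteq> i \<longrightarrow> ?T \<inter> M j = {}"
        using disj i interior_subset by blast
    qed
    moreover have "M i \<subseteq> ?T"
      using Mopen[of i] MU[of i] closure_subset[of "M i"] by (intro interior_maximal) auto
    ultimately show "M i = ?T" by blast
  qed
  let ?P = "{(i, j). 1 \<le> i \<and> i < j \<and> j \<le> r}"
  let ?R = "(\<Union>(i, j)\<in>?P. (closure (M i) \<inter> U) \<inter> (closure (M j) \<inter> U))"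
  have r1: "r \<ge> 1"
  proof (rule ccontr)
    assume "\<not> 1 \<le> r"
    then have "\<Gamma> = U" unfolding \<Gamma>_def by auto
    then show False using Gnull open_not_negligible[OF Uo] negligible_iff_null_sets by metis
  qed
  have ivL: "\<Gamma> \<subseteq> ?R"
  proof
    fix x assume xG: "x \<in> \<Gamma>"
    then have xU: "x \<in> U" unfolding \<Gamma>_def by auto
    show "x \<in> ?R"
    proof (rule ccontr)
      assume nx: "x \<notin> ?R"
      obtain i where i1: "i \<in> {1..r}" and ii: "\<forall>j\<in>{1..r}. j \<noteq> i \<longrightarrow> x \<notin> closure (M j)"
      proof (cases "\<exists>i\<in>{1..r}. x \<in> closure (M i)")
        case True
        then obtain i where i: "i\<in>{1..r}" "x \<in> closure (M i)" by blast
        have "\<forall>j\<in>{1..r}. j \<noteq> i \<longrightarrow> x \<notin> closure (M j)"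
        proof (intro ballI impI)
          fix j assume j: "j \<in> {1..r}" "j \<noteq> i"
          show "x \<notin> closure (M j)"
          proof
            assume xj: "x \<in> closure (M j)"
            show False
            proof (cases "i < j")
              case True
              then have "(i, j) \<in> ?P" using i j by auto
              then show False using nx xj i xU by blast
            next
              case False
              then have "(j, i) \<in> ?P" using i j by auto
              then show False using nx xj i xU by blast
            qed
          qed
        qed
        then show ?thesis using that i by blast
      next
        case False then show ?thesis using r1 that[of 1] by auto
      qed
      let ?T = "U - (\<Union>j\<in>{1..r}-{i}. closure (M j))"
      have "?T \<subseteq> M i"
      proof (rule key)
        show "open ?T" using Uo by (intro open_Diff closed_UN) auto
        show "?T \<subseteq> U" by blast
        show "\<forall>j\<in>{1..r}. j \<noteq> i \<longrightarrow> ?T \<inter> M j = {}" using closure_subset by blast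
      qed
      moreover have "x \<in> ?T" using xU ii by blast
      ultimately have "x \<in> M i" by blast
      then show False using xG i1 unfolding \<Gamma>_def M_def by blast
    qed
  qed
  have ivR: "?R \<subseteq> \<Gamma>"
  proof
    fix x assume "x \<in> ?R"
    then obtain i j where ij: "1 \<le> i" "i < j" "j \<le> r" "x \<in> closure (M i)" "x \<in> closure (M j)" "x \<in> U"
      by auto
    have "x \<in> dsupp U (\<lambda>x. \<phi> x - \<phi>s k x)" if k: "k \<in> {1..r}" for k
    proof (rule ccontr)
      assume "x \<notin> dsupp U (\<lambda>x. \<phi> x - \<phi>s k x)"
      then have xk: "x \<in> M k" using ij unfolding M_def by blast
      show False
      proof (cases "k = i")
        case True
        then show False using disj[of j k] xk ij by auto
      next
        case False
        then show False using disj[of i k] xk ij k by auto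
      qed
    qed
    then show "x \<in> \<Gamma>" unfolding \<Gamma>_def using ij by blast
  qed
  have part5: "\<Gamma> \<subseteq> {x. (\<Prod>(i, j)\<in>?P. \<phi>s i x - \<phi>s j x) = 0}" if ac: "ae_continuous_on U \<phi>"
  proof
    obtain c where c: "continuous_on U c" "AE x in lebesgue. x \<in> U \<longrightarrow> \<phi> x = c x"
      using ac unfolding ae_continuous_on_def by blast
    have eqc: "\<forall>y\<in>M i. c y = \<phi>s i y" if i: "i\<in>{1..r}" for i
    proof (rule cont_ae_eq[OF Mopen])
      show "continuous_on (M i) c" using c(1) MU continuous_on_subset by blast
      show "continuous_on (M i) (\<phi>s i)" using cont[OF i] MU continuous_on_subset by blast
      show "AE x in lebesgue. x \<in> M i \<longrightarrow> c x = \<phi>s i x"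
        using c(2) Mae[of i] by eventually_elim (use MU in force)
    qed
    fix x assume "x \<in> \<Gamma>"
    then have "x \<in> ?R" using ivL by blast
    then obtain i j where ij: "1 \<le> i" "i < j" "j \<le> r" "x \<in> closure (M i)" "x \<in> closure (M j)" "x \<in> U"
      by auto
    have "c x = \<phi>s i x" using ij by (intro closure_eq[OF c(1) cont MU _ _ eqc]) auto
    moreover have "c x = \<phi>s j x" using ij by (intro closure_eq[OF c(1) cont MU _ _ eqc]) auto
    ultimately have z: "\<phi>s i x - \<phi>s j x = 0" by simp
    have fin: "finite ?P" by (rule finite_subset[of _ "{1..r} \<times> {1..r}"]) auto
    have "(\<Prod>(i, j)\<in>?P. \<phi>s i x - \<phi>s j x) = 0"
      by (rule prod_zero[OF fin]) (use ij z in force)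
    then show "x \<in> {x. (\<Prod>(i, j)\<in>?P. \<phi>s i x - \<phi>s j x) = 0}" by simp
  qed
  show ?thesis using part1 disj part3 ivL ivR part5 by blast
qed

end
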